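(* Let $H$ be a graph with an optimal vector coloring $i\mapsto p_i$, and let $G$ be a graph with $H\subseteq G\subseteq H'(p)$ (all three graphs having vertex set $V(H)$). Then: (i) $i\mapsto p_i$ is an optimal vector coloring of $G$; in particular $\chi_v(H)=\chi_v(G)$. (ii) If $H$ is uniquely vector colorable, then $G$ is uniquely vector colorable, and $i\mapsto p_i$ is the unique optimal vector coloring of $G$ (up to equality of Gram matrices). Moreover, if $\langle p_i,p_j\rangle<-1/(\chi_v(G)-1)$ for some edge $i\sim_G j$, then the optimal vector coloring $i\mapsto p_i$ is not strict for $G$, and thus $\chi_v(G)<\chi_{sv}(G)$.
   Context: A vector $t$-coloring of a graph $G$ ($t\ge2$) is an assignment $i\mapsto p_i$ of unit vectors in some $\mathbb{R}^d$ to $V(G)$ with $\langle p_i,p_j\rangle\le -1/(t-1)$ whenever $i\sim j$; it is strict if equality holds for every edge. $\chi_v(G)$ (resp. $\chi_{sv}(G)$) is the smallest $t\ge 2$ for which a (resp. strict) vector $t$-coloring exists; a vector $\chi_v(G)$-coloring is optimal. $G$ is uniquely vector colorable if any two optimal vector colorings of $G$ have equal Gram matrices. For an optimal vector coloring $i\mapsto p_i$ of $H$, $H'(p)$ is the graph with vertex set $V(H)$ in which distinct $u,v$ are adjacent iff $\langle p_u,p_v\rangle\le -1/(\chi_v(H)-1)$. Subgraph inclusion $H\subseteq G$ means every edge of $H$ is an edge of $G$. *)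

theory Defs
  imports Complex_Main
begin

definition graph :: "'a set \<Rightarrow> ('a \<Rightarrow> 'a \<Rightarrow> bool) \<Rightarrow> bool" where
  "graph V E \<longleftrightarrow> finite V \<and> (\<forall>u v. E u v \<longrightarrow> u \<in> V \<and> v \<in> V \<and> u \<noteq> v \<and> E v u)"

text \<open>Vectors of R^d are represented by functions nat => real, of which only the
  first d coordinates are used; ip d is the standard inner product of R^d.\<close>
definition ip :: "nat \<Rightarrow> (nat \<Rightarrow> real) \<Rightarrow> (nat \<Rightarrow> real) \<Rightarrow> real" where
  "ip d x y = (\<Sum>k<d. x k * y k)"

definition vec_col :: "'a set \<Rightarrow> ('a \<Rightarrow> 'a \<Rightarrow> bool) \<Rightarrow> real \<Rightarrow> nat \<Rightarrow> ('a \<Rightarrow> nat \<Rightarrow> real) \<Rightarrow> bool" where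
  "vec_col V E t d p \<longleftrightarrow> t \<ge> 2 \<and> (\<forall>i\<in>V. ip d (p i) (p i) = 1) \<and>
     (\<forall>i j. E i j \<longrightarrow> ip d (p i) (p j) \<le> - 1 / (t - 1))"

definition strict_vec_col :: "'a set \<Rightarrow> ('a \<Rightarrow> 'a \<Rightarrow> bool) \<Rightarrow> real \<Rightarrow> nat \<Rightarrow> ('a \<Rightarrow> nat \<Rightarrow> real) \<Rightarrow> bool" where
  "strict_vec_col V E t d p \<longleftrightarrow> t \<ge> 2 \<and> (\<forall>i\<in>V. ip d (p i) (p i) = 1) \<and>
     (\<forall>i j. E i j \<longrightarrow> ip d (p i) (p j) = - 1 / (t - 1))"

definition chi_v :: "'a set \<Rightarrow> ('a \<Rightarrow> 'a \<Rightarrow> bool) \<Rightarrow> real" where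
  "chi_v V E = (LEAST t. \<exists>d p. vec_col V E t d p)"

definition chi_sv :: "'a set \<Rightarrow> ('a \<Rightarrow> 'a \<Rightarrow> bool) \<Rightarrow> real" where
  "chi_sv V E = (LEAST t. \<exists>d p. strict_vec_col V E t d p)"

definition optimal_vec_col :: "'a set \<Rightarrow> ('a \<Rightarrow> 'a \<Rightarrow> bool) \<Rightarrow> nat \<Rightarrow> ('a \<Rightarrow> nat \<Rightarrow> real) \<Rightarrow> bool" where
  "optimal_vec_col V E d p \<longleftrightarrow> vec_col V E (chi_v V E) d p"

definition same_gram :: "'a set \<Rightarrow> nat \<Rightarrow> ('a \<Rightarrow> nat \<Rightarrow> real) \<Rightarrow> nat \<Rightarrow> ('a \<Rightarrow> nat \<Rightarrow> real) \<Rightarrow> bool" where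
  "same_gram V d p d' q \<longleftrightarrow> (\<forall>i\<in>V. \<forall>j\<in>V. ip d (p i) (p j) = ip d' (q i) (q j))"

definition uniquely_vec_colorable :: "'a set \<Rightarrow> ('a \<Rightarrow> 'a \<Rightarrow> bool) \<Rightarrow> bool" where
  "uniquely_vec_colorable V E \<longleftrightarrow>
     (\<forall>d p d' q. optimal_vec_col V E d p \<and> optimal_vec_col V E d' q \<longrightarrow> same_gram V d p d' q)"

definition H_prime :: "'a set \<Rightarrow> ('a \<Rightarrow> 'a \<Rightarrow> bool) \<Rightarrow> nat \<Rightarrow> ('a \<Rightarrow> nat \<Rightarrow> real) \<Rightarrow> 'a \<Rightarrow> 'a \<Rightarrow> bool" where
  "H_prime V E d p u v \<longleftrightarrow> u \<in> V \<and> v \<in> V \<and> u \<noteq> v \<and> ip d (p u) (p v) \<le> - 1 / (chi_v V E - 1)"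

end

theory Submission imports Defs begin

lemma ip_comm: "ip d x y = ip d y x"
  unfolding ip_def by (simp add: mult.commute)

lemma ip_cong: "(\<And>c. c < d \<Longrightarrow> x c = x' c) \<Longrightarrow> ip d x y = ip d x' y"
  unfolding ip_def by (rule sum.cong) auto

lemma ip_sum_right: "ip d x (\<lambda>c. \<Sum>k\<in>K. a k * y k c) = (\<Sum>k\<in>K. a k * ip d x (y k))"
  unfolding ip_def by (simp add: sum_distrib_left sum.swap[of _ K] mult.left_commute)

lemma ip_diff_right: "ip d x (\<lambda>c. y c - z c) = ip d x y - ip d x z"
  unfolding ip_def by (simp add: right_diff_distrib sum_subtractf)

lemma ip_add_right: "ip d x (\<lambda>c. y c + z c) = ip d x y + ip d x z"
  unfolding ip_def by (simp add: distrib_left sum.distrib)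

lemma ip_div_right: "ip d x (\<lambda>c. y c / s) = ip d x y / s"
  unfolding ip_def by (simp add: sum_divide_distrib)

lemma ip_self_nonneg: "ip d x x \<ge> 0"
  unfolding ip_def by (simp add: sum_nonneg)

lemma ip_self_zero: "ip d x x = 0 \<Longrightarrow> c < d \<Longrightarrow> x c = 0"
  unfolding ip_def by (subst (asm) sum_nonneg_eq_0_iff) auto

lemma gs:
  fixes p :: "'a \<Rightarrow> nat \<Rightarrow> real"
  assumes "finite W"
  shows "\<exists>m e. m \<le> card W \<and> (\<forall>k<m. \<forall>l<m. ip d (e k) (e l) = (if k = l then 1 else 0))
     \<and> (\<forall>j\<in>W. \<forall>c<d. p j c = (\<Sum>k<m. ip d (p j) (e k) * e k c))"
  using assms
proof (induction W rule: finite_induct)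
  case empty
  show ?case by (rule exI[of _ 0]) auto
next
  case (insert a W)
  then obtain m e where m: "m \<le> card W"
    and on: "\<forall>k<m. \<forall>l<m. ip d (e k) (e l) = (if k = l then 1 else 0)"
    and ex: "\<forall>j\<in>W. \<forall>c<d. p j c = (\<Sum>k<m. ip d (p j) (e k) * e k c)" by blast
  have cardI: "card (insert a W) = card W + 1" using insert by simp
  define r where "r = (\<lambda>c. p a c - (\<Sum>k<m. ip d (p a) (e k) * e k c))"
  have er0: "ip d (e k) r = 0" if "k < m" for k
  proof -
    have "ip d (e k) r = ip d (e k) (p a) - (\<Sum>l<m. ip d (p a) (e l) * ip d (e k) (e l))"
      unfolding r_def by (simp add: ip_diff_right ip_sum_right)
    also have "(\<Sum>l<m. ip d (p a) (e l) * ip d (e k) (e l)) = (\<Sum>l<m. if k = l then ip d (p a) (e l) else 0)"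
      using on that by (intro sum.cong) auto
    also have "\<dots> = ip d (p a) (e k)" using that by simp
    finally show ?thesis by (simp add: ip_comm)
  qed
  have jr0: "ip d (p j) r = 0" if "j \<in> W" for j
  proof -
    have "ip d r (p j) = ip d r (\<lambda>c. \<Sum>k<m. ip d (p j) (e k) * e k c)"
    proof -
      have "ip d (p j) r = ip d (\<lambda>c. \<Sum>k<m. ip d (p j) (e k) * e k c) r"
        by (rule ip_cong) (use ex that in blast)
      then show ?thesis by (simp only: ip_comm[of d r])
    qed
    also have "\<dots> = (\<Sum>k<m. ip d (p j) (e k) * ip d r (e k))" by (rule ip_sum_right)
    also have "\<dots> = 0" using er0 by (simp add: ip_comm)
    finally show ?thesis by (simp add: ip_comm)
  qed
  show ?case
  proof (cases "ip d r r = 0")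
    case True
    have "\<forall>c<d. r c = 0" using ip_self_zero[OF True] by blast
    then have "\<forall>c<d. p a c = (\<Sum>k<m. ip d (p a) (e k) * e k c)" unfolding r_def by auto
    moreover have "m \<le> card (insert a W)" using m cardI by simp
    ultimately show ?thesis using on ex by blast
  next
    case False
    define s where "s = sqrt (ip d r r)"
    have s0: "s > 0" using False ip_self_nonneg[of d r] unfolding s_def by simp
    have ss: "s * s = ip d r r" unfolding s_def using ip_self_nonneg[of d r] by simp
    define e' where "e' = e(m := (\<lambda>c. r c / s))"
    have sumeq: "(\<Sum>k<Suc m. f k * e' k c) = (\<Sum>k<m. f k * e k c) + f m * (r c / s)" for f :: "nat \<Rightarrow> real" and c
    proof -
      have "(\<Sum>k<m. f k * e' k c) = (\<Sum>k<m. f k * e k c)"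
        unfolding e'_def by (intro sum.cong) auto
      then show ?thesis by (simp add: e'_def)
    qed
    have ipm: "ip d x (e' m) = ip d x r / s" for x unfolding e'_def by (simp add: ip_div_right)
    have em: "e' m = (\<lambda>c. r c / s)" unfolding e'_def by simp
    have mm: "ip d (e' m) (e' m) = 1"
    proof -
      have "ip d (e' m) (e' m) = ip d (e' m) r / s" by (rule ipm)
      also have "ip d (e' m) r = ip d r (e' m)" by (rule ip_comm)
      also have "\<dots> = ip d r r / s" by (rule ipm)
      finally show ?thesis using s0 ss False by (simp add: field_simps)
    qed
    have km: "ip d (e k) (e' m) = 0" "ip d (e' m) (e k) = 0" if "k < m" for k
    proof -
      show "ip d (e k) (e' m) = 0" using ipm[of "e k"] er0[OF that] by simp
      then show "ip d (e' m) (e k) = 0" by (simp add: ip_comm)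
    qed
    have on': "\<forall>k<Suc m. \<forall>l<Suc m. ip d (e' k) (e' l) = (if k = l then 1 else 0)"
    proof (intro allI impI)
      fix k l assume k: "k < Suc m" and l: "l < Suc m"
      show "ip d (e' k) (e' l) = (if k = l then 1 else 0)"
      proof (cases "k = m")
        case True
        show ?thesis
        proof (cases "l = m")
          case True
          with \<open>k = m\<close> show ?thesis using mm by simp
        next
          case False
          then have "e' l = e l" "l < m" using l unfolding e'_def by auto
          then show ?thesis using \<open>k = m\<close> False km(2)[of l] by simp
        qed
      next
        case False
        then have ek: "e' k = e k" "k < m" using k unfolding e'_def by auto
        show ?thesis
        proof (cases "l = m")
          case True
          then show ?thesis using ek km(1)[of k] False by simp
        next
          case False
          then have "e' l = e l" "l < m" using l unfolding e'_def by auto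
          then show ?thesis using ek on by simp
        qed
      qed
    qed
    have same: "ip d x (e' k) = ip d x (e k)" if "k < m" for x k
      using that unfolding e'_def by simp
    have ex': "\<forall>j\<in>insert a W. \<forall>c<d. p j c = (\<Sum>k<Suc m. ip d (p j) (e' k) * e' k c)"
    proof (intro ballI allI impI)
      fix j c assume j: "j \<in> insert a W" and c: "c < d"
      have "(\<Sum>k<Suc m. ip d (p j) (e' k) * e' k c) = (\<Sum>k<m. ip d (p j) (e' k) * e k c) + ip d (p j) (e' m) * (r c / s)"
        by (rule sumeq)
      also have "(\<Sum>k<m. ip d (p j) (e' k) * e k c) = (\<Sum>k<m. ip d (p j) (e k) * e k c)"
        using same by (intro sum.cong) auto
      finally have eq: "(\<Sum>k<Suc m. ip d (p j) (e' k) * e' k c) = (\<Sum>k<m. ip d (p j) (e k) * e k c) + ip d (p j) r / s * (r c / s)"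
        by (simp add: ipm)
      show "p j c = (\<Sum>k<Suc m. ip d (p j) (e' k) * e' k c)"
      proof (cases "j = a")
        case True
        have pa: "p a = (\<lambda>c. r c + (\<Sum>k<m. ip d (p a) (e k) * e k c))"
          unfolding r_def by (rule ext) simp
        have z: "ip d r (e k) = 0" if "k < m" for k
          using er0[OF that] ip_comm[of d r "e k"] by simp
        have "ip d r (p a) = ip d r r + (\<Sum>k<m. ip d (p a) (e k) * ip d r (e k))"
          by (subst pa) (simp only: ip_add_right ip_sum_right)
        also have "(\<Sum>k<m. ip d (p a) (e k) * ip d r (e k)) = 0"
          using z by simp
        finally have "ip d r (p a) = ip d r r" by simp
        then have "ip d (p a) r = s * s" using ss ip_comm[of d r "p a"] by linarith
        then have "ip d (p a) r / s * (r c / s) = r c" using s0 by (simp add: field_simps)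
        then have "(\<Sum>k<Suc m. ip d (p a) (e' k) * e' k c) = (\<Sum>k<m. ip d (p a) (e k) * e k c) + r c"
          using eq True by simp
        also have "\<dots> = p a c" unfolding r_def by simp
        finally show ?thesis using True by simp
      next
        case False
        then have "j \<in> W" using j by simp
        then show ?thesis using eq jr0[OF \<open>j \<in> W\<close>] ex[rule_format, OF \<open>j \<in> W\<close> c] by simp
      qed
    qed
    moreover have "Suc m \<le> card (insert a W)" using m cardI by simp
    ultimately show ?thesis using on' by blast
  qed
qed


lemma sum_if_less:
  fixes f :: "nat \<Rightarrow> real"
  assumes "m \<le> N" shows "(\<Sum>k<N. if k < m then f k else 0) = (\<Sum>k<m. f k)"
proof -
  have "(\<Sum>k<N. if k < m then f k else 0) = sum f {k\<in>{..<N}. k < m}"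
    by (rule sum.inter_filter[symmetric]) simp
  also have "{k\<in>{..<N}. k < m} = {..<m}" using assms by auto
  finally show ?thesis .
qed

lemma reduce:
  fixes p :: "'a \<Rightarrow> nat \<Rightarrow> real"
  assumes "finite V"
  shows "\<exists>q. \<forall>i\<in>V. \<forall>j\<in>V. ip (card V) (q i) (q j) = ip d (p i) (p j)"
proof -
  obtain m e where m: "m \<le> card V"
    and ex: "\<forall>j\<in>V. \<forall>c<d. p j c = (\<Sum>k<m. ip d (p j) (e k) * e k c)"
    using gs[OF assms, of d p] by blast
  define q where "q j k = (if k < m then ip d (p j) (e k) else 0)" for j k
  have "ip (card V) (q i) (q j) = ip d (p i) (p j)" if i: "i \<in> V" and j: "j \<in> V" for i j
  proof -
    have "ip (card V) (q i) (q j) = (\<Sum>k<card V. if k < m then ip d (p i) (e k) * ip d (p j) (e k) else 0)"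
      unfolding ip_def q_def by (intro sum.cong) auto
    also have "\<dots> = (\<Sum>k<m. ip d (p i) (e k) * ip d (p j) (e k))" by (rule sum_if_less[OF m])
    also have "\<dots> = (\<Sum>k<m. ip d (p j) (e k) * ip d (p i) (e k))" by (simp add: mult.commute)
    also have "\<dots> = ip d (p i) (\<lambda>c. \<Sum>k<m. ip d (p j) (e k) * e k c)"
      by (rule ip_sum_right[symmetric])
    also have "\<dots> = ip d (p i) (p j)"
    proof -
      have "ip d (p j) (p i) = ip d (\<lambda>c. \<Sum>k<m. ip d (p j) (e k) * e k c) (p i)"
        by (rule ip_cong) (use ex j in blast)
      then show ?thesis by (simp only: ip_comm[of d "p i"])
    qed
    finally show ?thesis .
  qed
  then show ?thesis by blast
qed

lemma common_subseq:
  fixes x :: "'i \<Rightarrow> nat \<Rightarrow> real"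
  assumes "finite I" "\<forall>i\<in>I. Bseq (x i)"
  shows "\<exists>r. strict_mono r \<and> (\<forall>i\<in>I. convergent (\<lambda>k. x i (r k)))"
  using assms
proof (induction I rule: finite_induct)
  case empty
  show ?case by (rule exI[of _ id]) (auto simp: strict_mono_def)
next
  case (insert a F)
  then obtain r where r: "strict_mono r" "\<forall>i\<in>F. convergent (\<lambda>k. x i (r k))" by auto
  have "Bseq (x a)" using insert.prems by simp
  then have b: "Bseq (\<lambda>k. x a (r k))" by (rule Bseq_subseq)
  obtain f where f: "strict_mono f" "monoseq (\<lambda>n. x a (r (f n)))"
    using seq_monosub[of "\<lambda>n. x a (r n)"] by auto
  have "convergent (\<lambda>n. x a (r (f n)))"
    using Bseq_monoseq_convergent[OF Bseq_subseq[OF b] f(2)] by simp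
  moreover have "convergent (\<lambda>n. x i (r (f n)))" if "i \<in> F" for i
    using convergent_subseq_convergent[OF r(2)[rule_format, OF that] f(1)] by (simp add: o_def)
  moreover have "strict_mono (r \<circ> f)" using strict_mono_o[OF r(1) f(1)] .
  ultimately have "strict_mono (r \<circ> f) \<and> (\<forall>i\<in>insert a F. convergent (\<lambda>k. x i ((r \<circ> f) k)))"
    by simp
  then show ?case by blast
qed

lemma coord_le: "c < n \<Longrightarrow> x c * x c \<le> ip n x x"
  unfolding ip_def by (rule member_le_sum[where f = "\<lambda>k. x k * x k"]) auto

lemma gram_limit:
  fixes pk :: "nat \<Rightarrow> 'a \<Rightarrow> nat \<Rightarrow> real"
  assumes fin: "finite V" and unit: "\<forall>k. \<forall>i\<in>V. ip (dk k) (pk k i) (pk k i) = 1"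
  shows "\<exists>r q. strict_mono r \<and> (\<forall>i\<in>V. \<forall>j\<in>V.
      (\<lambda>k. ip (dk (r k)) (pk (r k) i) (pk (r k) j)) \<longlonglongrightarrow> ip (card V) (q i) (q j))"
proof -
  define N where "N = card V"
  have "\<forall>k. \<exists>q. \<forall>i\<in>V. \<forall>j\<in>V. ip N (q i) (q j) = ip (dk k) (pk k i) (pk k j)"
    using reduce[OF fin] unfolding N_def by blast
  then obtain Q where Q: "\<And>k i j. i \<in> V \<Longrightarrow> j \<in> V \<Longrightarrow> ip N (Q k i) (Q k j) = ip (dk k) (pk k i) (pk k j)"
    by metis
  have bd: "\<bar>Q k i c\<bar> \<le> 1" if "i \<in> V" "c < N" for k i c
  proof -
    have "Q k i c * Q k i c \<le> 1" using coord_le[OF that(2), of "Q k i"] Q[OF that(1) that(1)] unit that(1)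
      by simp
    then show ?thesis using abs_square_le_1[of "Q k i c"] by (simp add: power2_eq_square)
  qed
  define X where "X = (\<lambda>(i, c) k. Q k i c)"
  have "\<forall>ic\<in>V \<times> {..<N}. Bseq (X ic)"
  proof
    fix ic assume "ic \<in> V \<times> {..<N}"
    then obtain i c where "ic = (i, c)" "i \<in> V" "c < N" by auto
    then show "Bseq (X ic)" using bd unfolding X_def by (intro BseqI'[where K = 1]) auto
  qed
  then obtain r where r: "strict_mono r" "\<forall>ic\<in>V \<times> {..<N}. convergent (\<lambda>k. X ic (r k))"
    using common_subseq[of "V \<times> {..<N}" X] fin by auto
  define q where "q i c = lim (\<lambda>k. Q (r k) i c)" for i c
  have lq: "(\<lambda>k. Q (r k) i c) \<longlonglongrightarrow> q i c" if "i \<in> V" "c < N" for i c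
    using r(2) that unfolding X_def q_def by (auto simp: convergent_LIMSEQ_iff)
  have "(\<lambda>k. ip (dk (r k)) (pk (r k) i) (pk (r k) j)) \<longlonglongrightarrow> ip N (q i) (q j)" if "i \<in> V" "j \<in> V" for i j
  proof -
    have "(\<lambda>k. ip N (Q (r k) i) (Q (r k) j)) \<longlonglongrightarrow> ip N (q i) (q j)"
      unfolding ip_def by (intro tendsto_sum tendsto_mult lq that) auto
    moreover have "(\<lambda>k. ip N (Q (r k) i) (Q (r k) j)) = (\<lambda>k. ip (dk (r k)) (pk (r k) i) (pk (r k) j))"
      using Q that by simp
    ultimately show ?thesis by simp
  qed
  then show ?thesis using r(1) unfolding N_def by blast
qed


lemma approx_seq:
  fixes S :: "real set"
  assumes ne: "S \<noteq> {}" and lb: "\<And>x. x \<in> S \<Longrightarrow> 2 \<le> x"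
  shows "\<exists>T. (\<forall>k. T k \<in> S) \<and> T \<longlonglongrightarrow> Inf S"
proof -
  have bdd: "bdd_below S" using lb by (auto simp: bdd_below_def)
  have "\<forall>k. \<exists>t\<in>S. t < Inf S + inverse (real (Suc k))"
    using cInf_lessD[OF ne] by (metis less_add_same_cancel1 inverse_positive_iff_positive of_nat_0_less_iff zero_less_Suc)
  then obtain T where T: "\<And>k. T k \<in> S" "\<And>k. T k < Inf S + inverse (real (Suc k))" by metis
  have "(\<lambda>k. Inf S + inverse (real (Suc k))) \<longlonglongrightarrow> Inf S + 0"
    by (intro tendsto_add tendsto_const LIMSEQ_inverse_real_of_nat)
  moreover have "\<forall>\<^sub>F k in sequentially. T k \<le> Inf S + inverse (real (Suc k))"
    using T(2) by (intro always_eventually allI less_imp_le)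
  moreover have "\<forall>\<^sub>F k in sequentially. Inf S \<le> T k"
    using T(1) cInf_lower[OF _ bdd] by (intro always_eventually allI) auto
  ultimately have "T \<longlonglongrightarrow> Inf S"
    by (intro tendsto_sandwich[of "\<lambda>k. Inf S" T sequentially "\<lambda>k. Inf S + inverse (real (Suc k))"]) auto
  then show ?thesis using T by blast
qed

lemma vec_min:
  assumes g: "graph V E" and ex: "vec_col V E t0 d0 p0"
  shows "\<exists>m d p. vec_col V E m d p \<and> (\<forall>t d p. vec_col V E t d p \<longrightarrow> m \<le> t)"
proof -
  define S where "S = {t. \<exists>d p. vec_col V E t d p}"
  have ne: "S \<noteq> {}" using ex unfolding S_def by blast
  have lb: "\<And>x. x \<in> S \<Longrightarrow> 2 \<le> x" unfolding S_def vec_col_def by auto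
  have bdd: "bdd_below S" using lb by (auto simp: bdd_below_def)
  obtain T where T: "\<And>k. T k \<in> S" "T \<longlonglongrightarrow> Inf S" using approx_seq[OF ne lb] by blast
  then have "\<forall>k. \<exists>d p. vec_col V E (T k) d p" unfolding S_def by blast
  then obtain D P where DP: "\<And>k. vec_col V E (T k) (D k) (P k)" by metis
  have fin: "finite V" using g unfolding graph_def by simp
  obtain r q where r: "strict_mono r"
    and lim: "\<And>i j. i \<in> V \<Longrightarrow> j \<in> V \<Longrightarrow> (\<lambda>k. ip (D (r k)) (P (r k) i) (P (r k) j)) \<longlonglongrightarrow> ip (card V) (q i) (q j)"
    using gram_limit[OF fin, of D P] DP unfolding vec_col_def by blast
  define m where "m = Inf S"
  have m2: "2 \<le> m" unfolding m_def using lb ne by (intro cInf_greatest) auto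
  have Tr: "(\<lambda>k. T (r k)) \<longlonglongrightarrow> m" using LIMSEQ_subseq_LIMSEQ[OF T(2) r] unfolding m_def by (simp add: o_def)
  have "vec_col V E m (card V) q"
    unfolding vec_col_def
  proof (intro conjI ballI allI impI)
    show "2 \<le> m" by (rule m2)
  next
    fix i assume i: "i \<in> V"
    have "(\<lambda>k. ip (D (r k)) (P (r k) i) (P (r k) i)) = (\<lambda>k. 1)"
      using DP i unfolding vec_col_def by auto
    then have "(\<lambda>k. 1::real) \<longlonglongrightarrow> ip (card V) (q i) (q i)" using lim[OF i i] by simp
    then show "ip (card V) (q i) (q i) = 1" using LIMSEQ_unique tendsto_const by blast
  next
    fix i j assume e: "E i j"
    then have ij: "i \<in> V" "j \<in> V" using g unfolding graph_def by auto
    have "(\<lambda>k. - 1 / (T (r k) - 1)) \<longlonglongrightarrow> - 1 / (m - 1)"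
      using m2 by (intro tendsto_intros Tr) auto
    moreover have "\<forall>k. ip (D (r k)) (P (r k) i) (P (r k) j) \<le> - 1 / (T (r k) - 1)"
      using DP e unfolding vec_col_def by auto
    ultimately show "ip (card V) (q i) (q j) \<le> - 1 / (m - 1)"
      using lim[OF ij] by (intro LIMSEQ_le) auto
  qed
  moreover have "\<forall>t d p. vec_col V E t d p \<longrightarrow> m \<le> t"
    unfolding m_def S_def using bdd by (auto intro: cInf_lower simp: S_def)
  ultimately show ?thesis by blast
qed

lemma strict_min:
  assumes g: "graph V E" and ex: "strict_vec_col V E t0 d0 p0"
  shows "\<exists>m d p. strict_vec_col V E m d p \<and> (\<forall>t d p. strict_vec_col V E t d p \<longrightarrow> m \<le> t)"
proof -
  define S where "S = {t. \<exists>d p. strict_vec_col V E t d p}"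
  have ne: "S \<noteq> {}" using ex unfolding S_def by blast
  have lb: "\<And>x. x \<in> S \<Longrightarrow> 2 \<le> x" unfolding S_def strict_vec_col_def by auto
  have bdd: "bdd_below S" using lb by (auto simp: bdd_below_def)
  obtain T where T: "\<And>k. T k \<in> S" "T \<longlonglongrightarrow> Inf S" using approx_seq[OF ne lb] by blast
  then have "\<forall>k. \<exists>d p. strict_vec_col V E (T k) d p" unfolding S_def by blast
  then obtain D P where DP: "\<And>k. strict_vec_col V E (T k) (D k) (P k)" by metis
  have fin: "finite V" using g unfolding graph_def by simp
  obtain r q where r: "strict_mono r"
    and lim: "\<And>i j. i \<in> V \<Longrightarrow> j \<in> V \<Longrightarrow> (\<lambda>k. ip (D (r k)) (P (r k) i) (P (r k) j)) \<longlonglongrightarrow> ip (card V) (q i) (q j)"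
    using gram_limit[OF fin, of D P] DP unfolding strict_vec_col_def by blast
  define m where "m = Inf S"
  have m2: "2 \<le> m" unfolding m_def using lb ne by (intro cInf_greatest) auto
  have Tr: "(\<lambda>k. T (r k)) \<longlonglongrightarrow> m" using LIMSEQ_subseq_LIMSEQ[OF T(2) r] unfolding m_def by (simp add: o_def)
  have "strict_vec_col V E m (card V) q"
    unfolding strict_vec_col_def
  proof (intro conjI ballI allI impI)
    show "2 \<le> m" by (rule m2)
  next
    fix i assume i: "i \<in> V"
    have "(\<lambda>k. ip (D (r k)) (P (r k) i) (P (r k) i)) = (\<lambda>k. 1)"
      using DP i unfolding strict_vec_col_def by auto
    then have "(\<lambda>k. 1::real) \<longlonglongrightarrow> ip (card V) (q i) (q i)" using lim[OF i i] by simp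
    then show "ip (card V) (q i) (q i) = 1" using LIMSEQ_unique tendsto_const by blast
  next
    fix i j assume e: "E i j"
    then have ij: "i \<in> V" "j \<in> V" using g unfolding graph_def by auto
    have "(\<lambda>k. - 1 / (T (r k) - 1)) \<longlonglongrightarrow> - 1 / (m - 1)"
      using m2 by (intro tendsto_intros Tr) auto
    moreover have "(\<lambda>k. ip (D (r k)) (P (r k) i) (P (r k) j)) = (\<lambda>k. - 1 / (T (r k) - 1))"
      using DP e unfolding strict_vec_col_def by auto
    ultimately show "ip (card V) (q i) (q j) = - 1 / (m - 1)"
      using lim[OF ij] LIMSEQ_unique by metis
  qed
  moreover have "\<forall>t d p. strict_vec_col V E t d p \<longrightarrow> m \<le> t"
    unfolding m_def S_def using bdd by (auto intro: cInf_lower simp: S_def)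
  ultimately show ?thesis by blast
qed


lemma sum_one:
  fixes A B :: real
  assumes "a0 < n"
  shows "(\<Sum>c<n. if c = a0 then A else B) = A + (real n - 1) * B"
proof -
  have "(\<Sum>c<n. if c = a0 then A else B) = (\<Sum>c<n. B + (if c = a0 then A - B else 0))"
    by (intro sum.cong) auto
  also have "\<dots> = real n * B + (A - B)" using assms by (simp add: sum.distrib)
  finally show ?thesis by (simp add: algebra_simps)
qed

lemma sum_two:
  fixes A B :: real
  assumes "a0 < n" "b0 < n" "a0 \<noteq> b0"
  shows "(\<Sum>c<n. (if c = a0 then A else B) * (if c = b0 then A else B)) = 2 * A * B + (real n - 2) * (B * B)"
proof -
  have "(\<Sum>c<n. (if c = a0 then A else B) * (if c = b0 then A else B))
      = (\<Sum>c<n. B * B + (if c = a0 then A * B - B * B else 0) + (if c = b0 then A * B - B * B else 0))"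
    using assms(3) by (intro sum.cong) auto
  also have "\<dots> = real n * (B * B) + (A * B - B * B) + (A * B - B * B)" using assms by (simp add: sum.distrib)
  finally show ?thesis by (simp add: algebra_simps)
qed

lemma strict_exists:
  assumes g: "graph V E"
  shows "\<exists>t d p. strict_vec_col V E t d p"
proof (cases "\<exists>i j. E i j")
  case False
  have "strict_vec_col V E 2 1 (\<lambda>i c. 1)"
    using False unfolding strict_vec_col_def ip_def by auto
  then show ?thesis by blast
next
  case True
  then obtain a b where ab: "E a b" by blast
  have fin: "finite V" using g unfolding graph_def by simp
  have abV: "a \<in> V" "b \<in> V" "a \<noteq> b" using ab g unfolding graph_def by auto
  define n where "n = card V"
  have "card {a, b} \<le> n" unfolding n_def using abV fin by (intro card_mono) auto
  then have n2: "2 \<le> n" using abV by simp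
  obtain f where f: "bij_betw f V {0..<n}" using ex_bij_betw_finite_nat[OF fin] unfolding n_def by blast
  have fl: "f i < n" if "i \<in> V" for i using f that unfolding bij_betw_def by auto
  have finj: "f i \<noteq> f j" if "i \<in> V" "j \<in> V" "i \<noteq> j" for i j
    using f that unfolding bij_betw_def inj_on_def by auto
  define x where "x = real n"
  have x2: "2 \<le> x" using n2 unfolding x_def by simp
  define u where "u = sqrt (x * (x - 1))"
  have uu: "u * u = x * (x - 1)" unfolding u_def using x2 by simp
  have "x * (x - 1) > 0" using x2 by (intro mult_pos_pos) auto
  then have u0: "u \<noteq> 0" unfolding u_def using x2 by simp
  define al where "al = (x - 1) / u"
  define be where "be = - 1 / u"
  define q where "q i c = (if c = f i then al else be)" for i c
  have "strict_vec_col V E x n q"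
    unfolding strict_vec_col_def
  proof (intro conjI ballI allI impI)
    show "2 \<le> x" by (rule x2)
  next
    fix i assume i: "i \<in> V"
    have "ip n (q i) (q i) = (\<Sum>c<n. if c = f i then al * al else be * be)"
      unfolding ip_def q_def by (intro sum.cong) auto
    also have "\<dots> = al * al + (x - 1) * (be * be)" using sum_one[OF fl[OF i]] unfolding x_def by simp
    also have "\<dots> = ((x - 1) * (x - 1) + (x - 1)) / (u * u)"
      unfolding al_def be_def using u0 by (simp add: field_simps)
    also have "\<dots> = 1" using uu x2 u0 by (simp add: field_simps)
    finally show "ip n (q i) (q i) = 1" .
  next
    fix i j assume e: "E i j"
    then have ij: "i \<in> V" "j \<in> V" "i \<noteq> j" using g unfolding graph_def by auto
    have "ip n (q i) (q j) = 2 * al * be + (x - 2) * (be * be)"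
      unfolding ip_def q_def using sum_two[OF fl[OF ij(1)] fl[OF ij(2)] finj[OF ij]] unfolding x_def by simp
    also have "\<dots> = (- 2 * (x - 1) + (x - 2)) / (u * u)"
      unfolding al_def be_def using u0 by (simp add: field_simps)
    also have "\<dots> = - 1 / (x - 1)" using uu x2 u0 by (simp add: field_simps)
    finally show "ip n (q i) (q j) = - 1 / (x - 1)" .
  qed
  then show ?thesis by blast
qed


theorem theorem3p12:
  fixes V :: "'a set" and EH EG :: "'a \<Rightarrow> 'a \<Rightarrow> bool"
    and d :: nat and p :: "'a \<Rightarrow> nat \<Rightarrow> real"
  assumes "graph V EH" and "graph V EG"
    and "optimal_vec_col V EH d p"
    and "\<And>u v. EH u v \<Longrightarrow> EG u v"
    and "\<And>u v. EG u v \<Longrightarrow> H_prime V EH d p u v"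
  shows "(optimal_vec_col V EG d p \<and> chi_v V EH = chi_v V EG)
       \<and> (uniquely_vec_colorable V EH \<longrightarrow>
            uniquely_vec_colorable V EG
          \<and> (\<forall>d' q. optimal_vec_col V EG d' q \<longrightarrow> same_gram V d p d' q)
          \<and> ((\<exists>i j. EG i j \<and> ip d (p i) (p j) < - 1 / (chi_v V EG - 1)) \<longrightarrow>
               \<not> strict_vec_col V EG (chi_v V EG) d p \<and> chi_v V EG < chi_sv V EG))"
proof -
  define c where "c = chi_v V EH"
  have pH: "vec_col V EH c d p" using assms(3) unfolding optimal_vec_col_def c_def .
  obtain m d0 p0 where m: "vec_col V EH m d0 p0" "\<forall>t d p. vec_col V EH t d p \<longrightarrow> m \<le> t"
    using vec_min[OF assms(1) pH] by blast
  have "chi_v V EH = m" unfolding chi_v_def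
    by (rule Least_equality) (use m in blast)+
  then have cm: "c = m" unfolding c_def .
  have subH: "vec_col V EH t d' q" if "vec_col V EG t d' q" for t d' q
    using that assms(4) unfolding vec_col_def by blast
  have pG: "vec_col V EG c d p"
    using pH assms(5) unfolding vec_col_def H_prime_def c_def by blast
  have minG: "c \<le> t" if "vec_col V EG t d' q" for t d' q
    using m(2) subH[OF that] cm by blast
  have cG: "chi_v V EG = c" unfolding chi_v_def
    by (rule Least_equality) (use pG minG in blast)+
  have part1: "optimal_vec_col V EG d p \<and> chi_v V EH = chi_v V EG"
    using pG cG unfolding optimal_vec_col_def c_def by simp
  have optGH: "optimal_vec_col V EH d' q" if "optimal_vec_col V EG d' q" for d' q
    using subH[of "chi_v V EG" d' q] that cG unfolding optimal_vec_col_def c_def by simp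
  have part2: "uniquely_vec_colorable V EG
          \<and> (\<forall>d' q. optimal_vec_col V EG d' q \<longrightarrow> same_gram V d p d' q)
          \<and> ((\<exists>i j. EG i j \<and> ip d (p i) (p j) < - 1 / (chi_v V EG - 1)) \<longrightarrow>
               \<not> strict_vec_col V EG (chi_v V EG) d p \<and> chi_v V EG < chi_sv V EG)"
    if U: "uniquely_vec_colorable V EH"
  proof (intro conjI allI impI)
    show "uniquely_vec_colorable V EG"
      using U optGH unfolding uniquely_vec_colorable_def by blast
  next
    fix d' q assume "optimal_vec_col V EG d' q"
    then show "same_gram V d p d' q"
      using U optGH assms(3) unfolding uniquely_vec_colorable_def by blast
  next
    assume "\<exists>i j. EG i j \<and> ip d (p i) (p j) < - 1 / (chi_v V EG - 1)"
    then obtain i j where ij: "EG i j" "ip d (p i) (p j) < - 1 / (chi_v V EG - 1)" by blast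
    have ijV: "i \<in> V" "j \<in> V" using ij(1) assms(2) unfolding graph_def by auto
    show "\<not> strict_vec_col V EG (chi_v V EG) d p"
      using ij unfolding strict_vec_col_def by auto
    obtain t0 d1 p1 where "strict_vec_col V EG t0 d1 p1" using strict_exists[OF assms(2)] by blast
    then obtain ms dd qq where ms: "strict_vec_col V EG ms dd qq"
      "\<forall>t d p. strict_vec_col V EG t d p \<longrightarrow> ms \<le> t"
      using strict_min[OF assms(2)] by blast
    have "chi_sv V EG = ms" unfolding chi_sv_def
      by (rule Least_equality) (use ms in blast)+
    moreover have vq: "vec_col V EG ms dd qq" using ms(1) unfolding strict_vec_col_def vec_col_def by simp
    then have le: "chi_v V EG \<le> ms" using minG cG by simp
    moreover have "ms \<noteq> chi_v V EG"
    proof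
      assume eq: "ms = chi_v V EG"
      then have "optimal_vec_col V EG dd qq" using vq unfolding optimal_vec_col_def by simp
      then have "same_gram V d p dd qq" using U optGH assms(3) unfolding uniquely_vec_colorable_def by blast
      then have "ip d (p i) (p j) = ip dd (qq i) (qq j)" using ijV unfolding same_gram_def by blast
      also have "\<dots> = - 1 / (chi_v V EG - 1)" using ms(1) ij(1) eq unfolding strict_vec_col_def by simp
      finally show False using ij(2) by simp
    qed
    ultimately show "chi_v V EG < chi_sv V EG" by simp
  qed
  show ?thesis using part1 part2 by blast
qed

end
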